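(* Let $\beta_1=\frac{p_1}{q_1}>1$ and $\beta_2=\frac{p_2}{q_2}>1$ with $\gcd(p_1,q_1)=\gcd(p_2,q_2)=1$, and suppose $p_1=k_1q_2$ and $p_2=k_2q_1$ for some $k_1,k_2\in\mathbb{N}$. Write $p_1=d_1q_1+j_1$ and $p_2=d_2q_2+j_2$ with $d_i\in\mathbb{N}$ and $0\le j_1<q_1$, $0\le j_2<q_2$. Then each of the sets $O_{T_{\beta_1\circ\beta_2}}(1)$, $O_{T_{\beta_2\circ\beta_1}}(1)$, $O_{T_{\beta_1\circ\beta_2}}(\frac{j_1}{q_1})$ and $O_{T_{\beta_2\circ\beta_1}}(\frac{j_2}{q_2})$ is finite.
   Context: For a real number $\gamma>1$ let $T_\gamma:[0,1)\to[0,1)$, $T_\gamma(x)=\gamma x \bmod 1$, and for reals $\gamma_1,\gamma_2>1$ let $T_{\gamma_1\circ\gamma_2}:=T_{\gamma_1}\circ T_{\gamma_2}$. At the point $1$ the map is defined by the left limit, $T_{\gamma_1\circ\gamma_2}(1):=\lim_{x\nearrow1}T_{\gamma_1\circ\gamma_2}(x)$. For a point $x$, $O_{T}(x):=\{T^k(x):k\ge1\}$ denotes its forward orbit under $T$. *)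

theory Defs
  imports Complex_Main
begin

definition Tb :: "real \<Rightarrow> real \<Rightarrow> real" where
  "Tb g x = g * x - of_int \<lfloor>g * x\<rfloor>"

definition Tcomp :: "real \<Rightarrow> real \<Rightarrow> real \<Rightarrow> real" where
  "Tcomp g1 g2 x =
     (if x = 1 then Lim (at_left 1) (\<lambda>y. Tb g1 (Tb g2 y)) else Tb g1 (Tb g2 x))"

definition orbit :: "(real \<Rightarrow> real) \<Rightarrow> real \<Rightarrow> real set" where
  "orbit T x = {(T ^^ k) x | k. k \<ge> 1}"

end

theory Submission
  imports Defs
begin

lemma lim_comp:
  fixes g1 g2 :: real assumes g1: "g1 > 0" and g2: "g2 > 0"
  shows "Lim (at_left 1) (\<lambda>y. Tb g1 (Tb g2 y)) =
     g1*(g2-of_int (\<lceil>g2\<rceil> - 1)) - of_int (\<lceil>g1*(g2-of_int (\<lceil>g2\<rceil> - 1))\<rceil> - 1)"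
proof -
  define n2 where "n2 = \<lceil>g2\<rceil> - 1"
  define n1 where "n1 = \<lceil>g1*(g2-of_int n2)\<rceil> - 1"
  have a2: "of_int n2 < g2" "g2 \<le> of_int n2 + 1" unfolding n2_def by linarith+
  have a1: "of_int n1 < g1*(g2-of_int n2)" "g1*(g2-of_int n2) \<le> of_int n1 + 1" unfolding n1_def by linarith+
  define b where "b = max (of_int n2/g2) ((of_int n1/g1 + of_int n2)/g2)"
  have "of_int n2/g2 < 1" using a2 g2 by simp
  moreover have "(of_int n1/g1 + of_int n2)/g2 < 1"
  proof -
    have "of_int n1/g1 < g2 - of_int n2" using a1 g1 by (simp add: divide_simps mult.commute)
    then show ?thesis using g2 by simp
  qed
  ultimately have b1: "b < 1" unfolding b_def by simp
  have ev: "eventually (\<lambda>y. Tb g1 (Tb g2 y) = g1*(g2*y - of_int n2) - of_int n1) (at_left 1)"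
    using eventually_at_left_real[OF b1]
  proof (rule eventually_mono)
    fix y assume y: "y \<in> {b<..<1}"
    have y1: "y > of_int n2/g2" "y > (of_int n1/g1 + of_int n2)/g2" "y < 1" using y unfolding b_def by auto
    have "of_int n2 < g2 * y" using y1(1) g2 by (simp add: field_simps)
    moreover have "g2 * y < g2" using y1(3) g2 by simp
    ultimately have f2: "\<lfloor>g2*y\<rfloor> = n2" using a2 by (intro floor_unique) auto
    have "of_int n1/g1 + of_int n2 < g2 * y" using y1(2) g2 by (simp add: field_simps)
    hence "of_int n1/g1 < g2*y - of_int n2" by simp
    hence c1: "of_int n1 < g1*(g2*y - of_int n2)" using g1 by (simp add: field_simps)
    have "g1*(g2*y - of_int n2) < g1*(g2 - of_int n2)" using \<open>g2*y < g2\<close> g1 by simp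
    hence f1: "\<lfloor>g1*(g2*y - of_int n2)\<rfloor> = n1" using a1 c1 by (intro floor_unique) auto
    show "Tb g1 (Tb g2 y) = g1*(g2*y - of_int n2) - of_int n1"
      unfolding Tb_def f2 f1 by simp
  qed
  have "((\<lambda>y. g1*(g2*y - of_int n2) - of_int n1) \<longlongrightarrow> g1*(g2*1 - of_int n2) - of_int n1) (at_left 1)"
    by (intro tendsto_intros)
  hence "((\<lambda>y. Tb g1 (Tb g2 y)) \<longlongrightarrow> g1*(g2 - of_int n2) - of_int n1) (at_left 1)"
    using tendsto_cong[OF ev] by simp
  then show ?thesis unfolding n1_def n2_def by (intro tendsto_Lim) auto
qed

definition Sq :: "nat \<Rightarrow> real set" where
  "Sq q = {x. \<exists>b::int. x = of_int b / real q \<and> 0 \<le> x \<and> x \<le> 1}"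

lemma finite_Sq: assumes "q > 0" shows "finite (Sq q)"
proof -
  have "Sq q \<subseteq> (\<lambda>b. of_int b / real q) ` {0..int q}"
  proof
    fix x assume "x \<in> Sq q"
    then obtain b where b: "x = of_int b / real q" "0 \<le> x" "x \<le> 1" unfolding Sq_def by auto
    have e: "real_of_int b = x * real q" using b assms by (simp add: field_simps)
    have "0 \<le> x * real q" using b(2) by simp
    moreover have "x * real q \<le> 1 * real q" using b by (intro mult_right_mono) auto
    ultimately have "0 \<le> real_of_int b" "real_of_int b \<le> real q" using e by auto
    hence "0 \<le> b" "real_of_int b \<le> real_of_int (int q)" by auto
    hence "b \<in> {0..int q}" by (simp only: of_int_le_iff atLeastAtMost_iff)
    thus "x \<in> (\<lambda>b. of_int b / real q) ` {0..int q}" using b by auto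
  qed
  thus ?thesis by (rule finite_subset) auto
qed

lemma Tb_bounds: "0 \<le> Tb g x" "Tb g x < 1"
  unfolding Tb_def by linarith+

lemma Tb_int:
  assumes "q > 0" "q' > 0" "p = k * q'"
  shows "Tb (real p / real q) (of_int a / real q') = of_int (int k * a - \<lfloor>real p / real q * (of_int a / real q')\<rfloor> * int q) / real q"
proof -
  have "real p / real q * (of_int a / real q') = of_int (int k * a) / real q"
    using assms by (simp add: field_simps)
  then show ?thesis unfolding Tb_def using assms by (simp add: field_simps)
qed

lemma step_in:
  assumes q1: "q1 > 0" and q2: "q2 > 0" and r1: "real p1 / real q1 > 1" and r2: "real p2 / real q2 > 1"
    and e1: "p1 = k1 * q2" and e2: "p2 = k2 * q1" and x: "x \<in> Sq q1"
  shows "Tcomp (real p1 / real q1) (real p2 / real q2) x \<in> Sq q1"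
proof (cases "x = 1")
  case True
  define g1 where "g1 = real p1 / real q1"
  define g2 where "g2 = real p2 / real q2"
  have g1: "g1 > 0" and g2: "g2 > 0" using r1 r2 g1_def g2_def by auto
  define n2 where "n2 = \<lceil>g2\<rceil> - 1"
  define n1 where "n1 = \<lceil>g1*(g2-of_int n2)\<rceil> - 1"
  have L: "Tcomp g1 g2 x = g1*(g2-of_int n2) - of_int n1"
    unfolding Tcomp_def n1_def n2_def using True lim_comp[OF g1 g2] by simp
  have a1: "of_int n1 < g1*(g2-of_int n2)" "g1*(g2-of_int n2) \<le> of_int n1 + 1" unfolding n1_def by linarith+
  have E: "g1*(g2-of_int n2) - of_int n1 = of_int (int k1 * (int p2 - n2 * int q2) - n1 * int q1) / real q1"
    unfolding g1_def g2_def using q1 q2 e1 by (simp add: field_simps)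
  show ?thesis unfolding Sq_def
    by (intro CollectI exI[of _ "int k1 * (int p2 - n2 * int q2) - n1 * int q1"])
      (use L a1 E g1_def g2_def in auto)
next
  case False
  obtain a where a: "x = of_int a / real q1" using x unfolding Sq_def by auto
  have t2: "Tb (real p2 / real q2) x = of_int (int k2 * a - \<lfloor>real p2 / real q2 * (of_int a / real q1)\<rfloor> * int q2) / real q2"
    unfolding a by (rule Tb_int[OF q2 q1 e2])
  define c where "c = int k2 * a - \<lfloor>real p2 / real q2 * (of_int a / real q1)\<rfloor> * int q2"
  have t1: "Tb (real p1 / real q1) (of_int c / real q2) = of_int (int k1 * c - \<lfloor>real p1 / real q1 * (of_int c / real q2)\<rfloor> * int q1) / real q1"
    by (rule Tb_int[OF q1 q2 e1])
  have "Tcomp (real p1 / real q1) (real p2 / real q2) x = Tb (real p1 / real q1) (of_int c / real q2)"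
    unfolding Tcomp_def using False t2 c_def by simp
  then show ?thesis unfolding Sq_def using t1 Tb_bounds[of "real p1 / real q1" "of_int c / real q2"]
    by (intro CollectI exI[of _ "int k1 * c - \<lfloor>real p1 / real q1 * (of_int c / real q2)\<rfloor> * int q1"]) auto
qed

lemma orbit_fin:
  assumes "\<And>x. x \<in> S \<Longrightarrow> T x \<in> S" "finite S" "x \<in> S"
  shows "finite (orbit T x)"
proof -
  have "(T ^^ k) x \<in> S" for k by (induction k) (use assms in auto)
  hence "orbit T x \<subseteq> S" unfolding orbit_def by auto
  thus ?thesis using assms(2) finite_subset by blast
qed

theorem lemma4p2:
  fixes p1 q1 p2 q2 k1 k2 d1 d2 j1 j2 :: nat
  assumes "q1 > 0" and "q2 > 0"
    and "real p1 / real q1 > 1" and "real p2 / real q2 > 1"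
    and "coprime p1 q1" and "coprime p2 q2"
    and "p1 = k1 * q2" and "p2 = k2 * q1"
    and "p1 = d1 * q1 + j1" and "j1 < q1"
    and "p2 = d2 * q2 + j2" and "j2 < q2"
  shows "finite (orbit (Tcomp (real p1 / real q1) (real p2 / real q2)) 1)
       \<and> finite (orbit (Tcomp (real p2 / real q2) (real p1 / real q1)) 1)
       \<and> finite (orbit (Tcomp (real p1 / real q1) (real p2 / real q2)) (real j1 / real q1))
       \<and> finite (orbit (Tcomp (real p2 / real q2) (real p1 / real q1)) (real j2 / real q2))"
proof -
  have s1: "\<And>x. x \<in> Sq q1 \<Longrightarrow> Tcomp (real p1 / real q1) (real p2 / real q2) x \<in> Sq q1"
    using step_in[of q1 q2 p1 p2 k1 k2] assms by blast
  have s2: "\<And>x. x \<in> Sq q2 \<Longrightarrow> Tcomp (real p2 / real q2) (real p1 / real q1) x \<in> Sq q2"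
    using step_in[of q2 q1 p2 p1 k2 k1] assms by blast
  have o1: "1 \<in> Sq q1" unfolding Sq_def using assms(1)
    by (intro CollectI exI[of _ "int q1"]) auto
  have o2: "1 \<in> Sq q2" unfolding Sq_def using assms(2)
    by (intro CollectI exI[of _ "int q2"]) auto
  have o3: "real j1 / real q1 \<in> Sq q1" unfolding Sq_def using assms(1,10)
    by (intro CollectI exI[of _ "int j1"]) auto
  have o4: "real j2 / real q2 \<in> Sq q2" unfolding Sq_def using assms(2,12)
    by (intro CollectI exI[of _ "int j2"]) auto
  let ?T1 = "Tcomp (real p1 / real q1) (real p2 / real q2)"
  let ?T2 = "Tcomp (real p2 / real q2) (real p1 / real q1)"
  show ?thesis
    using orbit_fin[where T="?T1", OF s1 finite_Sq[OF assms(1)] o1]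
      orbit_fin[where T="?T2", OF s2 finite_Sq[OF assms(2)] o2]
      orbit_fin[where T="?T1", OF s1 finite_Sq[OF assms(1)] o3]
      orbit_fin[where T="?T2", OF s2 finite_Sq[OF assms(2)] o4] by blast
qed

end
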